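(* Let $A\in\mathbb C^{m\times n}$, $m<n$, have full rank, let $0<p_0\le1$, and assume there exists $X\in\mathcal G(A)$ each of whose columns has at most $k_{p_0}(A)$ nonzero entries. Then for all $0<q<\infty$ and all $0\le p\le p_0$, $\mathrm{ginv}_{\mathrm{col}(p,q)}(A)=\{X\}$.
   Context: $\mathcal G(A)=\{X\in\mathbb C^{n\times m}:AX=I_m\}$, $\mathrm{ginv}_\nu(A)=\arg\min_{X\in\mathcal G(A)}\|X\|_\nu$. $\|x\|_0$ is the number of nonzero entries of $x$, and for $0<p<1$, $\|x\|_p=(\sum_i|x_i|^p)^{1/p}$. For $M$ with columns $m_j$, $\|M\|_{\mathrm{col}(p,q)}=(\sum_j\|m_j\|_p^q)^{1/q}$. For $0\le p\le1$, $k_p(A)$ is the largest integer $k$ such that for every $x\in\mathbb C^n$ with $\|x\|_0\le k$, $x$ is the unique minimizer of $\|\hat x\|_p$ subject to $A\hat x=Ax$. *)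

theory Defs
  imports "HOL-Analysis.Analysis" "Jordan_Normal_Form.DL_Rank"
begin

definition Ginv_set :: "complex mat \<Rightarrow> complex mat set" where
  "Ginv_set A = {X \<in> carrier_mat (dim_col A) (dim_row A). A * X = 1\<^sub>m (dim_row A)}"

definition ginv :: "(complex mat \<Rightarrow> real) \<Rightarrow> complex mat \<Rightarrow> complex mat set" where
  "ginv \<nu> A = {X \<in> Ginv_set A. \<forall>Y \<in> Ginv_set A. \<nu> X \<le> \<nu> Y}"

definition nnz :: "complex vec \<Rightarrow> nat" where
  "nnz x = card {i. i < dim_vec x \<and> x $ i \<noteq> 0}"

definition pnorm :: "real \<Rightarrow> complex vec \<Rightarrow> real" where
  "pnorm p x = (if p = 0 then real (nnz x)
               else (\<Sum>i<dim_vec x. cmod (x $ i) powr p) powr (1 / p))"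

definition colnorm :: "real \<Rightarrow> real \<Rightarrow> complex mat \<Rightarrow> real" where
  "colnorm p q M = (\<Sum>j<dim_col M. pnorm p (col M j) powr q) powr (1 / q)"

definition recovers :: "real \<Rightarrow> complex mat \<Rightarrow> nat \<Rightarrow> bool" where
  "recovers p A k = (\<forall>x \<in> carrier_vec (dim_col A). nnz x \<le> k \<longrightarrow>
      (\<forall>y \<in> carrier_vec (dim_col A). A *\<^sub>v y = A *\<^sub>v x \<longrightarrow> y \<noteq> x \<longrightarrow> pnorm p x < pnorm p y))"

definition kp :: "real \<Rightarrow> complex mat \<Rightarrow> nat" where
  "kp p A = (GREATEST k. recovers p A k)"

end

theory Submission
  imports Defs
begin

lemma powr_subadd:
  fixes a b r :: real
  assumes "0 \<le> a" "0 \<le> b" "0 \<le> r" "r \<le> 1"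
  shows "(a + b) powr r \<le> a powr r + b powr r"
proof (cases "a = 0 \<or> b = 0")
  case True then show ?thesis using assms by auto
next
  case False
  hence a: "a > 0" and b: "b > 0" using assms by auto
  show ?thesis
  proof (cases "r = 0")
    case True then show ?thesis using a b by simp
  next
    case False
    have "(a+b) powr r = (a+b) * (a+b) powr (r - 1)"
      using a b by (simp add: powr_diff)
    also have "\<dots> = a * (a+b) powr (r - 1) + b * (a+b) powr (r-1)" by (simp add: algebra_simps)
    also have "\<dots> \<le> a * a powr (r-1) + b * b powr (r-1)"
      apply (rule add_mono; rule mult_left_mono)
      using a b assms by (auto intro!: powr_mono2')
    also have "\<dots> = a powr r + b powr r" using a b by (simp add: powr_diff)
    finally show ?thesis .
  qed
qed

lemma powr_mono_r:
  fixes x y r :: real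
  assumes "0 \<le> x" "x \<le> y" "0 \<le> r"
  shows "x powr r \<le> y powr r"
proof (cases "r = 0")
  case True thus ?thesis using assms by auto
next
  case False thus ?thesis using assms by (intro powr_mono2) auto
qed

definition badset :: "(nat \<Rightarrow> real) \<Rightarrow> nat set \<Rightarrow> nat set \<Rightarrow> nat set" where
  "badset a I S = {j \<in> I - S. \<exists>i\<in>S. 0 < a i \<and> a i < a j}"

lemma nsp_base:
  fixes a :: "nat \<Rightarrow> real"
  assumes fin: "finite I" and nonneg: "\<forall>i\<in>I. 0 \<le> a i" and p: "0 < p" "0 \<le> r" "r \<le> p"
    and SI: "S \<subseteq> I" and HS: "(\<Sum>i\<in>S. a i powr p) < (\<Sum>i\<in>I-S. a i powr p)"
    and B: "badset a I S = {}"
  shows "(\<Sum>i\<in>S. a i powr r) < (\<Sum>i\<in>I-S. a i powr r)"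
proof -
  define S0 where "S0 = {i\<in>S. 0 < a i}"
  have finS: "finite S" using fin SI finite_subset by blast
  show ?thesis
  proof (cases "S0 = {}")
    case True
    have z: "\<forall>i\<in>S. a i = 0" using True nonneg SI unfolding S0_def by force
    hence "(\<Sum>i\<in>S. a i powr p) = 0" by simp
    with HS have "(\<Sum>i\<in>I-S. a i powr p) \<noteq> 0" by simp
    then obtain j where j: "j \<in> I - S" "a j powr p \<noteq> 0" by (meson sum.neutral)
    hence aj: "a j > 0" using nonneg by (metis DiffD1 less_eq_real_def powr_0)
    have "(\<Sum>i\<in>S. a i powr r) = 0" using z by simp
    also have "0 < a j powr r" using aj by simp
    also have "a j powr r \<le> (\<Sum>i\<in>I-S. a i powr r)"
      by (rule member_le_sum) (use j fin in auto)
    finally show ?thesis .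
  next
    case False
    define t where "t = Min (a ` S0)"
    have finS0: "finite S0" using finS unfolding S0_def by auto
    have tin: "t \<in> a ` S0" unfolding t_def using False finS0 by (intro Min_in) auto
    then obtain i0 where i0: "i0 \<in> S0" "a i0 = t" by auto
    have tpos: "t > 0" using i0 unfolding S0_def by auto
    have tle: "\<And>i. i \<in> S0 \<Longrightarrow> t \<le> a i" unfolding t_def using finS0 by auto
    have small: "\<And>j. j \<in> I - S \<Longrightarrow> a j \<le> t"
    proof (rule ccontr)
      fix j assume j: "j \<in> I - S" "\<not> a j \<le> t"
      hence "j \<in> badset a I S" using i0 tpos unfolding badset_def S0_def by auto
      with B show False by auto
    qed
    define c where "c = t powr (r - p)"
    have cpos: "c > 0" unfolding c_def using tpos by simp
    have pt1: "a i powr r \<le> c * a i powr p" if "i \<in> S" for i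
    proof (cases "a i = 0")
      case True thus ?thesis by simp
    next
      case False
      hence ai: "a i > 0" using nonneg SI that by force
      hence "i \<in> S0" using that unfolding S0_def by auto
      hence "t \<le> a i" by (rule tle)
      hence "a i powr (r - p) \<le> c" unfolding c_def using tpos p by (intro powr_mono2') auto
      hence "a i powr (r - p) * a i powr p \<le> c * a i powr p" by (simp add: mult_right_mono)
      moreover have "a i powr (r - p) * a i powr p = a i powr r" by (simp add: powr_add[symmetric])
      ultimately show ?thesis by simp
    qed
    have pt2: "c * a j powr p \<le> a j powr r" if "j \<in> I - S" for j
    proof (cases "a j = 0")
      case True thus ?thesis by simp
    next
      case False
      hence aj: "a j > 0" using nonneg that by force
      have "a j \<le> t" using small that .
      hence "c \<le> a j powr (r - p)" unfolding c_def using aj p by (intro powr_mono2') auto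
      hence "c * a j powr p \<le> a j powr (r - p) * a j powr p" by (simp add: mult_right_mono)
      moreover have "a j powr (r - p) * a j powr p = a j powr r" by (simp add: powr_add[symmetric])
      ultimately show ?thesis by simp
    qed
    have "(\<Sum>i\<in>S. a i powr r) \<le> (\<Sum>i\<in>S. c * a i powr p)" by (rule sum_mono) (rule pt1)
    also have "\<dots> = c * (\<Sum>i\<in>S. a i powr p)" by (simp add: sum_distrib_left)
    also have "\<dots> < c * (\<Sum>i\<in>I-S. a i powr p)" using cpos HS by simp
    also have "\<dots> = (\<Sum>i\<in>I-S. c * a i powr p)" by (simp add: sum_distrib_left)
    also have "\<dots> \<le> (\<Sum>i\<in>I-S. a i powr r)" by (rule sum_mono) (rule pt2)
    finally show ?thesis .
  qed
qed

lemma nsp_step: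
  fixes a :: "nat \<Rightarrow> real"
  assumes fin: "finite I" and nonneg: "\<forall>i\<in>I. 0 \<le> a i" and r: "0 \<le> r"
    and SI: "S \<subseteq> I" and B: "badset a I S \<noteq> {}"
  shows "\<exists>S'. S' \<subseteq> I \<and> card S' = card S \<and> card (badset a I S') < card (badset a I S)
     \<and> (\<Sum>i\<in>S. a i powr r) \<le> (\<Sum>i\<in>S'. a i powr r)
     \<and> (\<Sum>i\<in>I-S'. a i powr r) \<le> (\<Sum>i\<in>I-S. a i powr r)"
proof -
  define S0 where "S0 = {i\<in>S. 0 < a i}"
  have finS: "finite S" using fin SI finite_subset by blast
  obtain j where j: "j \<in> badset a I S" using B by auto
  then obtain i1 where i1: "i1 \<in> S" "0 < a i1" "a i1 < a j" and jIS: "j \<in> I" "j \<notin> S"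
    unfolding badset_def by auto
  have ne: "S0 \<noteq> {}" using i1 unfolding S0_def by auto
  define t where "t = Min (a ` S0)"
  have finS0: "finite S0" using finS unfolding S0_def by auto
  have tin: "t \<in> a ` S0" unfolding t_def using ne finS0 by (intro Min_in) auto
  then obtain i where i: "i \<in> S0" "a i = t" by auto
  have tle: "\<And>i. i \<in> S0 \<Longrightarrow> t \<le> a i" unfolding t_def using finS0 by auto
  have iS: "i \<in> S" "0 < a i" using i unfolding S0_def by auto
  have aij: "a i < a j" using tle[of i1] i1 i unfolding S0_def by auto
  have ij: "i \<noteq> j" using iS jIS by auto
  define S' where "S' = insert j (S - {i})"
  have S'I: "S' \<subseteq> I" using SI jIS unfolding S'_def by auto
  have cardS': "card S' = card S" unfolding S'_def using finS iS jIS
    by (simp add: card_Diff_singleton) (metis Suc_pred card_gt_0_iff empty_iff)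
  have f_le: "a i powr r \<le> a j powr r" using aij iS r by (intro powr_mono_r) auto
  have sum1: "(\<Sum>k\<in>S'. a k powr r) = a j powr r + (\<Sum>k\<in>S. a k powr r) - a i powr r"
    unfolding S'_def using finS iS jIS by (simp add: sum_diff1)
  have IS': "I - S' = insert i ((I - S) - {j})" unfolding S'_def using SI iS ij by auto
  have finIS: "finite (I - S)" using fin by auto
  have sum2: "(\<Sum>k\<in>I-S'. a k powr r) = a i powr r + (\<Sum>k\<in>I-S. a k powr r) - a j powr r"
    unfolding IS' using finIS iS jIS by (simp add: sum_diff1)
  have sub: "badset a I S' \<subseteq> badset a I S - {j}"
  proof
    fix l assume l: "l \<in> badset a I S'"
    then obtain i' where i': "i' \<in> S'" "0 < a i'" "a i' < a l" and lI: "l \<in> I" "l \<notin> S'"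
      unfolding badset_def by auto
    have lj: "l \<noteq> j" using lI unfolding S'_def by auto
    have li: "l \<noteq> i"
    proof
      assume "l = i"
      show False
      proof (cases "i' = j")
        case True thus False using i' aij \<open>l = i\<close> by auto
      next
        case False
        hence "i' \<in> S0" using i' unfolding S'_def S0_def by auto
        hence "t \<le> a i'" by (rule tle)
        thus False using i' \<open>l = i\<close> i by auto
      qed
    qed
    have lS: "l \<notin> S" using lI li unfolding S'_def by auto
    have "\<exists>i''\<in>S. 0 < a i'' \<and> a i'' < a l"
    proof (cases "i' = j")
      case True thus ?thesis using iS aij i' by (intro bexI[of _ i]) auto
    next
      case False thus ?thesis using i' unfolding S'_def by auto
    qed
    thus "l \<in> badset a I S - {j}" using lI lS lj unfolding badset_def by auto
  qed
  have finB: "finite (badset a I S)" unfolding badset_def using fin by auto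
  have "card (badset a I S') \<le> card (badset a I S - {j})"
    using sub finB by (intro card_mono) auto
  also have "\<dots> < card (badset a I S)" using finB j by (rule card_Diff1_less)
  finally have "card (badset a I S') < card (badset a I S)" .
  thus ?thesis using S'I cardS' sum1 sum2 f_le by (intro exI[of _ S']) auto
qed

lemma nsp_mono:
  fixes a :: "nat \<Rightarrow> real"
  assumes fin: "finite I" and nonneg: "\<forall>i\<in>I. 0 \<le> a i" and p: "0 < p" "0 \<le> r" "r \<le> p"
    and H: "\<forall>S. S \<subseteq> I \<and> card S \<le> k \<longrightarrow> (\<Sum>i\<in>S. a i powr p) < (\<Sum>i\<in>I-S. a i powr p)"
  shows "S \<subseteq> I \<Longrightarrow> card S \<le> k \<Longrightarrow> (\<Sum>i\<in>S. a i powr r) < (\<Sum>i\<in>I-S. a i powr r)"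
proof (induction "card (badset a I S)" arbitrary: S rule: less_induct)
  case less
  show ?case
  proof (cases "badset a I S = {}")
    case True
    thus ?thesis using nsp_base[OF fin nonneg p less.prems(1)] H less.prems by blast
  next
    case False
    then obtain S' where S': "S' \<subseteq> I" "card S' = card S" "card (badset a I S') < card (badset a I S)"
      "(\<Sum>i\<in>S. a i powr r) \<le> (\<Sum>i\<in>S'. a i powr r)"
      "(\<Sum>i\<in>I-S'. a i powr r) \<le> (\<Sum>i\<in>I-S. a i powr r)"
      using nsp_step[OF fin nonneg p(2) less.prems(1)] by blast
    have "(\<Sum>i\<in>S'. a i powr r) < (\<Sum>i\<in>I-S'. a i powr r)"
      using less.hyps[OF S'(3) S'(1)] S'(2) less.prems(2) by simp
    thus ?thesis using S'(4,5) by linarith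
  qed
qed


lemma kernel_nonzero:
  fixes A :: "complex mat"
  assumes A: "A \<in> carrier_mat m n" and mn: "m < n" and rk: "vec_space.rank m A = m"
  shows "\<exists>z\<in>carrier_vec n. z \<noteq> 0\<^sub>v n \<and> A *\<^sub>v z = 0\<^sub>v m"
proof (cases "distinct (cols A)")
  case True
  have "\<not> module.lin_indpt class_ring (module_vec TYPE(complex) m) (set (cols A))"
  proof
    assume "module.lin_indpt class_ring (module_vec TYPE(complex) m) (set (cols A))"
    hence "vec_space.rank m A = n" using vec_space.lin_indpt_full_rank[OF A True] by auto
    thus False using rk mn by simp
  qed
  then obtain v where "v \<in> carrier_vec n" "v \<noteq> 0\<^sub>v n" "A *\<^sub>v v = 0\<^sub>v m"
    using vec_space.lin_depE[OF A _ True] by blast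
  thus ?thesis by blast
next
  case False
  then obtain i j where ij: "i < length (cols A)" "j < length (cols A)" "i \<noteq> j" "cols A ! i = cols A ! j"
    using distinct_conv_nth by blast
  have ijn: "i < n" "j < n" using ij A by auto
  have colij: "col A i = col A j" using ij A by auto
  define z :: "complex vec" where "z = unit_vec n i - unit_vec n j"
  have zc: "z \<in> carrier_vec n" unfolding z_def by auto
  have "z $ i = 1" unfolding z_def using ijn ij by auto
  hence "z \<noteq> 0\<^sub>v n" using ijn by auto
  moreover have "A *\<^sub>v z = 0\<^sub>v m"
  proof -
    have "A *\<^sub>v z = A *\<^sub>v unit_vec n i - A *\<^sub>v unit_vec n j"
      unfolding z_def using A by (simp add: mult_minus_distrib_mat_vec)
    also have "\<dots> = col A i - col A j"
    proof -
      have "A *\<^sub>v unit_vec n k = col A k" if "k < n" for k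
        using A that by (intro eq_vecI) auto
      thus ?thesis using ijn by simp
    qed
    also have "\<dots> = 0\<^sub>v m"
    proof -
      have "col A j \<in> carrier_vec m" using A by auto
      thus ?thesis using colij by simp
    qed
    finally show ?thesis .
  qed
  ultimately show ?thesis using zc by blast
qed

definition psum :: "real \<Rightarrow> complex vec \<Rightarrow> real" where
  "psum p x = (\<Sum>i<dim_vec x. cmod (x $ i) powr p)"

lemma psum_nonneg: "0 \<le> psum p x"
  unfolding psum_def by (intro sum_nonneg) auto

lemma nnz_psum: fixes x :: "complex vec" shows "real (nnz x) = psum 0 x"
proof -
  have "real (nnz x) = (\<Sum>i\<in>{i. i < dim_vec x \<and> x $ i \<noteq> 0}. 1)" unfolding nnz_def by simp
  also have "{i. i < dim_vec x \<and> x $ i \<noteq> 0} = {i\<in>{..<dim_vec x}. x $ i \<noteq> 0}" by auto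
  also have "(\<Sum>i\<in>{i\<in>{..<dim_vec x}. x $ i \<noteq> 0}. (1::real)) = (\<Sum>i<dim_vec x. if x $ i \<noteq> 0 then 1 else 0)"
    by (rule sum.inter_filter) simp
  also have "\<dots> = psum 0 x" unfolding psum_def by (intro sum.cong) auto
  finally show ?thesis .
qed

lemma pnorm_nonneg: "0 \<le> pnorm p x"
  unfolding pnorm_def by auto

lemma pnorm_less_iff:
  assumes "0 \<le> p"
  shows "pnorm p x < pnorm p y \<longleftrightarrow> psum p x < psum p y"
proof (cases "p = 0")
  case True thus ?thesis unfolding pnorm_def using nnz_psum by simp
next
  case False
  hence pp: "p > 0" using assms by simp
  have e: "pnorm p v = psum p v powr (1/p)" for v unfolding pnorm_def psum_def using False by simp
  show ?thesis
  proof
    assume "pnorm p x < pnorm p y"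
    thus "psum p x < psum p y" unfolding e
      using powr_mono2[of "1/p" "psum p y" "psum p x"] pp psum_nonneg by force
  next
    assume "psum p x < psum p y"
    thus "pnorm p x < pnorm p y" unfolding e using pp psum_nonneg by (intro powr_less_mono2) auto
  qed
qed

lemma psum_restrict:
  fixes x :: "complex vec"
  assumes "x \<in> carrier_vec n" and "\<forall>i<n. i \<notin> S \<longrightarrow> x $ i = 0" and "S \<subseteq> {..<n}" and "0 \<le> p"
  shows "psum p x = (\<Sum>i\<in>S. cmod (x $ i) powr p)"
proof -
  have "psum p x = (\<Sum>i<n. cmod (x $ i) powr p)" unfolding psum_def using assms by auto
  also have "\<dots> = (\<Sum>i\<in>S. cmod (x $ i) powr p)"
    using assms by (intro sum.mono_neutral_right) auto
  finally show ?thesis .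
qed

lemma recovers_nsp:
  fixes A :: "complex mat" and z :: "complex vec"
  assumes A: "A \<in> carrier_mat m n" and rec: "recovers p A k" and p: "0 < p"
    and z: "z \<in> carrier_vec n" "A *\<^sub>v z = 0\<^sub>v m" "z \<noteq> 0\<^sub>v n"
    and S: "S \<subseteq> {..<n}" "card S \<le> k"
  shows "(\<Sum>i\<in>S. cmod (z $ i) powr p) < (\<Sum>i\<in>{..<n}-S. cmod (z $ i) powr p)"
proof -
  define x :: "complex vec" where "x = vec n (\<lambda>i. if i \<in> S then - z $ i else 0)"
  define y :: "complex vec" where "y = vec n (\<lambda>i. if i \<in> S then 0 else z $ i)"
  have xc: "x \<in> carrier_vec n" and yc: "y \<in> carrier_vec n" unfolding x_def y_def by auto
  have yxz: "y = x + z" unfolding x_def y_def using z by (intro eq_vecI) auto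
  have "A *\<^sub>v y = A *\<^sub>v x + A *\<^sub>v z" unfolding yxz using A xc z by (simp add: mult_add_distrib_mat_vec)
  hence Ay: "A *\<^sub>v y = A *\<^sub>v x" using z A xc by simp
  have yx: "y \<noteq> x"
  proof
    assume "y = x"
    hence "z = 0\<^sub>v n"
    proof (intro eq_vecI)
      fix i assume "y = x" "i < dim_vec (0\<^sub>v n)"
      hence "y $ i = x $ i" "i < n" by auto
      thus "z $ i = 0\<^sub>v n $ i" unfolding x_def y_def by (auto split: if_splits)
    qed (use z in auto)
    with z show False by simp
  qed
  have "{i. i < dim_vec x \<and> x $ i \<noteq> 0} \<subseteq> S" unfolding x_def by (auto split: if_splits)
  hence "nnz x \<le> card S" unfolding nnz_def using S finite_subset by (intro card_mono) auto
  hence "nnz x \<le> k" using S by simp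
  hence "pnorm p x < pnorm p y" using rec xc yc Ay yx A unfolding recovers_def by auto
  hence lt: "psum p x < psum p y" using pnorm_less_iff p by simp
  have "psum p x = (\<Sum>i\<in>S. cmod (x $ i) powr p)"
    by (rule psum_restrict[OF xc]) (use S p in \<open>auto simp: x_def\<close>)
  also have "\<dots> = (\<Sum>i\<in>S. cmod (z $ i) powr p)"
    using S unfolding x_def by (intro sum.cong) auto
  finally have e1: "psum p x = (\<Sum>i\<in>S. cmod (z $ i) powr p)" .
  have "psum p y = (\<Sum>i\<in>{..<n}-S. cmod (y $ i) powr p)"
    by (rule psum_restrict[OF yc]) (use S p in \<open>auto simp: y_def\<close>)
  also have "\<dots> = (\<Sum>i\<in>{..<n}-S. cmod (z $ i) powr p)"
    unfolding y_def by (intro sum.cong) auto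
  finally have e2: "psum p y = (\<Sum>i\<in>{..<n}-S. cmod (z $ i) powr p)" .
  show ?thesis using lt e1 e2 by simp
qed

lemma recover_p:
  fixes A :: "complex mat" and x y :: "complex vec"
  assumes A: "A \<in> carrier_mat m n" and rec: "recovers p0 A k"
    and p0: "0 < p0" "p0 \<le> 1" and p: "0 \<le> p" "p \<le> p0"
    and x: "x \<in> carrier_vec n" "nnz x \<le> k"
    and y: "y \<in> carrier_vec n" "A *\<^sub>v y = A *\<^sub>v x" "y \<noteq> x"
  shows "pnorm p x < pnorm p y"
proof -
  define z :: "complex vec" where "z = y - x"
  have zc: "z \<in> carrier_vec n" unfolding z_def using x y by auto
  have Az: "A *\<^sub>v z = 0\<^sub>v m" unfolding z_def using A x y by (simp add: mult_minus_distrib_mat_vec)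
  have zn: "z \<noteq> 0\<^sub>v n"
  proof
    assume "z = 0\<^sub>v n"
    have "y = x"
    proof (rule eq_vecI)
      fix i assume "i < dim_vec x"
      hence i: "i < n" using x by auto
      have "(y - x) $ i = 0" using \<open>z = 0\<^sub>v n\<close> i unfolding z_def by simp
      thus "y $ i = x $ i" using x y i by simp
    qed (use x y in auto)
    with y show False by simp
  qed
  define a where "a = (\<lambda>i. cmod (z $ i))"
  define S where "S = {i. i < n \<and> x $ i \<noteq> 0}"
  have SI: "S \<subseteq> {..<n}" unfolding S_def by auto
  have cS: "card S \<le> k" using x unfolding S_def nnz_def by simp
  have H: "\<forall>S. S \<subseteq> {..<n} \<and> card S \<le> k \<longrightarrow> (\<Sum>i\<in>S. a i powr p0) < (\<Sum>i\<in>{..<n}-S. a i powr p0)"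
    unfolding a_def using recovers_nsp[OF A rec p0(1) zc Az zn] by blast
  have nsp: "(\<Sum>i\<in>S. a i powr p) < (\<Sum>i\<in>{..<n}-S. a i powr p)"
    by (rule nsp_mono[OF _ _ p0(1) p H SI cS]) (auto simp: a_def)
  have xyz: "x $ i = y $ i - z $ i" if "i < n" for i unfolding z_def using that x y by auto
  have "psum p x = (\<Sum>i\<in>S. cmod (x $ i) powr p)"
    by (rule psum_restrict[OF x(1)]) (use SI p in \<open>auto simp: S_def\<close>)
  also have "\<dots> \<le> (\<Sum>i\<in>S. cmod (y $ i) powr p + a i powr p)"
  proof (rule sum_mono)
    fix i assume "i \<in> S"
    hence i: "i < n" using SI by auto
    have "cmod (x $ i) \<le> cmod (y $ i) + a i" unfolding a_def xyz[OF i] by (rule norm_triangle_ineq4)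
    hence "cmod (x $ i) powr p \<le> (cmod (y $ i) + a i) powr p" using p by (intro powr_mono_r) auto
    also have "\<dots> \<le> cmod (y $ i) powr p + a i powr p" using p p0 by (intro powr_subadd) (auto simp: a_def)
    finally show "cmod (x $ i) powr p \<le> cmod (y $ i) powr p + a i powr p" .
  qed
  also have "\<dots> = (\<Sum>i\<in>S. cmod (y $ i) powr p) + (\<Sum>i\<in>S. a i powr p)" by (simp add: sum.distrib)
  also have "\<dots> < (\<Sum>i\<in>S. cmod (y $ i) powr p) + (\<Sum>i\<in>{..<n}-S. a i powr p)" using nsp by simp
  also have "(\<Sum>i\<in>{..<n}-S. a i powr p) = (\<Sum>i\<in>{..<n}-S. cmod (y $ i) powr p)"
  proof (intro sum.cong refl)
    fix i assume "i \<in> {..<n} - S"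
    hence "i < n" "x $ i = 0" unfolding S_def by auto
    thus "a i powr p = cmod (y $ i) powr p" unfolding a_def z_def using x y by auto
  qed
  also have "(\<Sum>i\<in>S. cmod (y $ i) powr p) + (\<Sum>i\<in>{..<n}-S. cmod (y $ i) powr p) = psum p y"
    unfolding psum_def using y SI by (simp add: sum.subset_diff[of S "{..<n}"])
  finally show ?thesis using pnorm_less_iff p by simp
qed

lemma recovers_zero:
  fixes A :: "complex mat"
  assumes "0 < p"
  shows "recovers p A 0"
  unfolding recovers_def
proof (intro ballI impI)
  fix x y :: "complex vec" assume x: "x \<in> carrier_vec (dim_col A)" "nnz x \<le> 0"
    and y: "y \<in> carrier_vec (dim_col A)" and "A *\<^sub>v y = A *\<^sub>v x" "y \<noteq> x"
  have "{i. i < dim_vec x \<and> x $ i \<noteq> 0} = {}" using x unfolding nnz_def by simp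
  hence x0: "x = 0\<^sub>v (dim_col A)" using x by (intro eq_vecI) auto
  hence "psum p x = 0" unfolding psum_def by simp
  moreover have "\<not> (\<forall>i<dim_col A. y $ i = 0)"
  proof
    assume "\<forall>i<dim_col A. y $ i = 0"
    hence "y = x" using x0 y by (intro eq_vecI) auto
    with \<open>y \<noteq> x\<close> show False by simp
  qed
  then obtain i where i: "i < dim_col A" "y $ i \<noteq> 0" by auto
  have "0 < cmod (y $ i) powr p" using i by simp
  also have "\<dots> \<le> psum p y" unfolding psum_def using i y
    by (intro member_le_sum) auto
  finally show "pnorm p x < pnorm p y" using pnorm_less_iff[of p] assms \<open>psum p x = 0\<close> by simp
qed

lemma recovers_bound:
  fixes A :: "complex mat"
  assumes A: "A \<in> carrier_mat m n" and mn: "m < n" and rk: "vec_space.rank m A = m"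
    and rec: "recovers p A k" and p: "0 \<le> p"
  shows "k \<le> n"
proof (rule ccontr)
  assume "\<not> k \<le> n"
  obtain z :: "complex vec" where z: "z \<in> carrier_vec n" "z \<noteq> 0\<^sub>v n" "A *\<^sub>v z = 0\<^sub>v m"
    using kernel_nonzero[OF A mn rk] by blast
  have "nnz z \<le> card {..<n}" unfolding nnz_def using z by (intro card_mono) auto
  hence "nnz z \<le> k" using \<open>\<not> k \<le> n\<close> by simp
  moreover have "A *\<^sub>v 0\<^sub>v n = A *\<^sub>v z"
  proof -
    have "A *\<^sub>v 0\<^sub>v n = 0\<^sub>v m" using A by (intro eq_vecI) auto
    thus ?thesis using z by simp
  qed
  ultimately have "pnorm p z < pnorm p (0\<^sub>v n)" using rec z A unfolding recovers_def by auto
  moreover have "psum p (0\<^sub>v n) = 0" unfolding psum_def by simp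
  ultimately show False using pnorm_less_iff[OF p] psum_nonneg[of p z] by simp
qed

theorem theorem6:
  fixes A X :: "complex mat" and m n :: nat and p0 :: real
  assumes "A \<in> carrier_mat m n" and "m < n"
    and "vec_space.rank m A = m"
    and "0 < p0" and "p0 \<le> 1"
    and "X \<in> Ginv_set A"
    and "\<forall>j < dim_col X. nnz (col X j) \<le> kp p0 A"
  shows "\<forall>q p. 0 < q \<and> 0 \<le> p \<and> p \<le> p0 \<longrightarrow> ginv (colnorm p q) A = {X}"
proof (intro allI impI)
  fix q p :: real assume qp: "0 < q \<and> 0 \<le> p \<and> p \<le> p0"
  note A = assms(1)
  have rec: "recovers p0 A (kp p0 A)" unfolding kp_def
  proof (rule GreatestI_nat[where k = 0 and b = n])
    show "recovers p0 A 0" by (rule recovers_zero[OF assms(4)])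
  next
    fix y assume "recovers p0 A y"
    thus "y \<le> n" by (rule recovers_bound[OF A assms(2,3) _ less_imp_le[OF assms(4)]])
  qed
  have Xc: "X \<in> carrier_mat n m" and AX: "A * X = 1\<^sub>m m" using assms(6) A unfolding Ginv_set_def by auto
  have key: "colnorm p q X < colnorm p q Y" if Y: "Y \<in> Ginv_set A" "Y \<noteq> X" for Y
  proof -
    have Yc: "Y \<in> carrier_mat n m" and AY: "A * Y = 1\<^sub>m m" using Y A unfolding Ginv_set_def by auto
    have colj: "col X j \<in> carrier_vec n" "col Y j \<in> carrier_vec n"
      "A *\<^sub>v col Y j = A *\<^sub>v col X j" if j: "j < m" for j
    proof -
      show "col X j \<in> carrier_vec n" "col Y j \<in> carrier_vec n" using Xc Yc by auto
      have "A *\<^sub>v col Y j = col (A * Y) j" using col_mult2[OF A Yc j] by simp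
      also have "\<dots> = col (A * X) j" using AX AY by simp
      also have "\<dots> = A *\<^sub>v col X j" using col_mult2[OF A Xc j] by simp
      finally show "A *\<^sub>v col Y j = A *\<^sub>v col X j" .
    qed
    have strict: "pnorm p (col X j) < pnorm p (col Y j)" if j: "j < m" "col Y j \<noteq> col X j" for j
    proof -
      have "nnz (col X j) \<le> kp p0 A" using assms(7) Xc j by auto
      thus ?thesis using recover_p[OF A rec assms(4,5), of p "col X j" "col Y j"] qp colj[OF j(1)] j(2)
        by blast
    qed
    have le: "pnorm p (col X j) \<le> pnorm p (col Y j)" if j: "j < m" for j
      using strict[OF j] by (cases "col Y j = col X j") auto
    have "\<exists>j<m. col Y j \<noteq> col X j"
    proof (rule ccontr)
      assume "\<not> (\<exists>j<m. col Y j \<noteq> col X j)"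
      hence "Y = X" using Xc Yc by (intro mat_col_eqI) auto
      with Y(2) show False by simp
    qed
    then obtain j0 where j0: "j0 < m" "col Y j0 \<noteq> col X j0" by blast
    have "(\<Sum>j<m. pnorm p (col X j) powr q) < (\<Sum>j<m. pnorm p (col Y j) powr q)"
    proof (rule sum_strict_mono_ex1)
      show "\<forall>j\<in>{..<m}. pnorm p (col X j) powr q \<le> pnorm p (col Y j) powr q"
        using le qp pnorm_nonneg by (auto intro!: powr_mono2)
      show "\<exists>j\<in>{..<m}. pnorm p (col X j) powr q < pnorm p (col Y j) powr q"
        using j0 strict[OF j0] qp pnorm_nonneg by (intro bexI[of _ j0] powr_less_mono2) auto
    qed simp
    hence "(\<Sum>j<m. pnorm p (col X j) powr q) powr (1/q) < (\<Sum>j<m. pnorm p (col Y j) powr q) powr (1/q)"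
      using qp by (intro powr_less_mono2) (auto intro!: sum_nonneg)
    thus ?thesis unfolding colnorm_def using Xc Yc by simp
  qed
  show "ginv (colnorm p q) A = {X}"
  proof
    show "ginv (colnorm p q) A \<subseteq> {X}"
    proof
      fix Y assume "Y \<in> ginv (colnorm p q) A"
      hence "Y \<in> Ginv_set A" "colnorm p q Y \<le> colnorm p q X" using assms(6) unfolding ginv_def by auto
      thus "Y \<in> {X}" using key by force
    qed
    have "\<forall>Y\<in>Ginv_set A. colnorm p q X \<le> colnorm p q Y"
    proof
      fix Y assume "Y \<in> Ginv_set A"
      thus "colnorm p q X \<le> colnorm p q Y" using key[of Y] by (cases "Y = X") auto
    qed
    thus "{X} \<subseteq> ginv (colnorm p q) A" using assms(6) unfolding ginv_def by auto
  qed
qed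

end
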